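(* Let $n\ge 1$, $\mu\in\mathbb{R}$, $\alpha>0$, and let $\lambda_1,\dots,\lambda_n>0$ and $\lambda^*_1,\dots,\lambda^*_n>0$. Let $X_1,\dots,X_n$ be independent random variables with $X_i\sim \mathrm{Fr\acute{e}}(\mu,\lambda_i,\alpha)$, and let $X^*_1,\dots,X^*_n$ be independent random variables with $X^*_i\sim \mathrm{Fr\acute{e}}(\mu,\lambda^*_i,\alpha)$, $i=1,\dots,n$. Let $f:(0,\infty)\to\mathbb{R}$ be strictly monotone with differentiable inverse $f^{-1}$, and put $k(a)=(f^{-1})'(a)\,\big(f^{-1}(a)\big)^{\alpha-1}$. Write $\boldsymbol{u}=(f(\lambda_1),\dots,f(\lambda_n))$ and $\boldsymbol{u}^*=(f(\lambda^*_1),\dots,f(\lambda^*_n))$. Suppose first that $f$ is strictly decreasing. Then: (i) if $k$ is increasing and $\sum_{i=1}^{j}u^*_{(i)}\ge \sum_{i=1}^{j}u_{(i)}$ for all $j=1,\dots,n$, then $X_{n:n}\ge_{\rm rh}X^*_{n:n}$; (ii) if $k$ is decreasing and $\sum_{i=j}^{n}u_{(i)}\le \sum_{i=j}^{n}u^*_{(i)}$ for all $j=1,\dots,n$, then $X_{n:n}\ge_{\rm rh}X^*_{n:n}$. Suppose instead that $f$ is strictly increasing. Then: (i') if $k$ is decreasing and $\sum_{i=1}^{j}u^*_{(i)}\ge \sum_{i=1}^{j}u_{(i)}$ for all $j=1,\dots,n$, then $X_{n:n}\le_{\rm rh}X^*_{n:n}$; (ii') if $k$ is increasing and $\sum_{i=j}^{n}u_{(i)}\le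 \sum_{i=j}^{n}u^*_{(i)}$ for all $j=1,\dots,n$, then $X_{n:n}\le_{\rm rh}X^*_{n:n}$.
   Context: $X\sim \mathrm{Fr\acute{e}}(\mu,\lambda,\alpha)$ (Fréchet distribution with location $\mu\in\mathbb{R}$, scale $\lambda>0$, shape $\alpha>0$) means $X$ has distribution function $\exp\{-((x-\mu)/\lambda)^{-\alpha}\}$ for $x>\mu$. $X_{n:n}=\max(X_1,\dots,X_n)$. For a vector $\boldsymbol{x}$, $x_{(1)}\le\dots\le x_{(n)}$ denotes its components in increasing order. For random variables $X,Y$ with distribution functions $F,G$ and densities, the reversed hazard rates are $\tilde r_F=F'/F$, $\tilde r_G=G'/G$, and $X\le_{\rm rh}Y$ means $\tilde r_F(x)\le\tilde r_G(x)$ for all $x$. "Increasing" means nondecreasing and "decreasing" means nonincreasing. *)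

theory Defs
  imports "HOL-Probability.Probability"
begin

definition frechet_cdf :: "real \<Rightarrow> real \<Rightarrow> real \<Rightarrow> real \<Rightarrow> real" where
  "frechet_cdf mu lam alpha x = (if x > mu then exp (- (((x - mu) / lam) powr (- alpha))) else 0)"

definition dist_fun :: "'a measure \<Rightarrow> ('a \<Rightarrow> real) \<Rightarrow> real \<Rightarrow> real" where
  "dist_fun M X = cdf (distr M borel X)"

definition rh_le :: "(real \<Rightarrow> real) \<Rightarrow> (real \<Rightarrow> real) \<Rightarrow> bool" where
  "rh_le F G \<longleftrightarrow> (\<forall>x. F differentiable at x) \<and> (\<forall>x. G differentiable at x) \<and>
     (\<forall>x. deriv F x / F x \<le> deriv G x / G x)"

definition rv_rh_le :: "'a measure \<Rightarrow> ('a \<Rightarrow> real) \<Rightarrow> 'b measure \<Rightarrow> ('b \<Rightarrow> real) \<Rightarrow> bool" where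
  "rv_rh_le M X N Y \<longleftrightarrow> rh_le (dist_fun M X) (dist_fun N Y)"

definition max_stat :: "nat \<Rightarrow> (nat \<Rightarrow> 'a \<Rightarrow> real) \<Rightarrow> 'a \<Rightarrow> real" where
  "max_stat n X = (\<lambda>\<omega>. Max ((\<lambda>i. X i \<omega>) ` {1..n}))"

text \<open>i-th smallest component (1-based) of the vector (u 1, ..., u n).\<close>
definition ord_comp :: "nat \<Rightarrow> (nat \<Rightarrow> real) \<Rightarrow> nat \<Rightarrow> real" where
  "ord_comp n u i = sort (map u [1..<n+1]) ! (i - 1)"

end

theory Submission
  imports Defs "HOL-Real_Asymp.Real_Asymp"
begin


lemma tangent_ineq:
  fixes g g' :: "real \<Rightarrow> real"
  assumes I: "connected I" and der: "\<forall>t\<in>I. (g has_real_derivative g' t) (at t)"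
    and mon: "mono_on I g'" and a: "a \<in> I" and b: "b \<in> I"
  shows "g a - g b \<le> g' a * (a - b)"
proof (cases a b rule: linorder_cases)
  case less
  have "\<And>x. a \<le> x \<Longrightarrow> x \<le> b \<Longrightarrow> DERIV g x :> g' x"
    using der connectedD_interval[OF I a b] by blast
  from MVT2[OF less this] obtain z where z: "a < z" "z < b" "g b - g a = (b - a) * g' z" by blast
  have zI: "z \<in> I" using connectedD_interval[OF I a b] z by auto
  have "g' a \<le> g' z" using mon a zI z unfolding mono_on_def by auto
  then have h: "(b - a) * g' a \<le> (b - a) * g' z" using less by (intro mult_left_mono) auto
  show ?thesis using z(3) h by (simp add: algebra_simps)
next
  case equal then show ?thesis by simp
next
  case greater
  have "\<And>x. b \<le> x \<Longrightarrow> x \<le> a \<Longrightarrow> DERIV g x :> g' x"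
    using der connectedD_interval[OF I b a] by blast
  from MVT2[OF greater this] obtain z where z: "b < z" "z < a" "g a - g b = (a - b) * g' z" by blast
  have zI: "z \<in> I" using connectedD_interval[OF I b a] z by auto
  have "g' z \<le> g' a" using mon a zI z unfolding mono_on_def by auto
  then have h: "(a - b) * g' z \<le> (a - b) * g' a" using greater by (intro mult_left_mono) auto
  show ?thesis using z(3) h by (simp add: algebra_simps)
qed

lemma abelA:
  fixes c d :: "nat \<Rightarrow> real"
  assumes mono: "\<And>i j. 1 \<le> i \<Longrightarrow> i \<le> j \<Longrightarrow> j \<le> n \<Longrightarrow> c i \<le> c j"
    and cn: "c n \<le> 0" and pre: "\<forall>j\<in>{1..n}. (\<Sum>i=1..j. d i) \<ge> 0"
  shows "(\<Sum>i=1..n. c i * d i) \<le> 0"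
proof (cases "n = 0")
  case True then show ?thesis by simp
next
  case False
  have key: "1 \<le> m \<Longrightarrow> m \<le> n \<Longrightarrow> (\<Sum>i=1..m. c i * d i) \<le> c m * (\<Sum>i=1..m. d i)" for m
  proof (induction m)
    case 0 then show ?case by simp
  next
    case (Suc m)
    show ?case
    proof (cases "m = 0")
      case True then show ?thesis by simp
    next
      case False
      have IH: "(\<Sum>i=1..m. c i * d i) \<le> c m * (\<Sum>i=1..m. d i)" using Suc False by simp
      have "(\<Sum>i=1..Suc m. c i * d i) = (\<Sum>i=1..m. c i * d i) + c (Suc m) * d (Suc m)"
        by simp
      also have "\<dots> \<le> c m * (\<Sum>i=1..m. d i) + c (Suc m) * d (Suc m)"
        using IH by simp
      also have "\<dots> \<le> c (Suc m) * (\<Sum>i=1..m. d i) + c (Suc m) * d (Suc m)"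
        using mono[of m "Suc m"] pre Suc.prems False
        by (intro add_right_mono mult_right_mono) auto
      also have "\<dots> = c (Suc m) * (\<Sum>i=1..Suc m. d i)" by (simp add: algebra_simps)
      finally show ?thesis .
    qed
  qed
  have "(\<Sum>i=1..n. c i * d i) \<le> c n * (\<Sum>i=1..n. d i)" using key False by simp
  also have "\<dots> \<le> 0" using cn pre False by (simp add: mult_nonpos_nonneg)
  finally show ?thesis .
qed

lemma abelB:
  fixes c d :: "nat \<Rightarrow> real"
  assumes mono: "\<And>i j. 1 \<le> i \<Longrightarrow> i \<le> j \<Longrightarrow> j \<le> n \<Longrightarrow> c i \<le> c j"
    and c1: "c 1 \<ge> 0" and suf: "\<forall>j\<in>{1..n}. (\<Sum>i=j..n. d i) \<le> 0"
  shows "(\<Sum>i=1..n. c i * d i) \<le> 0"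
proof (cases "n = 0")
  case True then show ?thesis by simp
next
  case False
  have key: "(\<Sum>i=m..n. c i * d i) \<le> c m * (\<Sum>i=m..n. d i)" if "1 \<le> m" "m \<le> n" for m
    using that(2,1)
  proof (induction m rule: inc_induct)
    case base then show ?case by simp
  next
    case (step m)
    have "(\<Sum>i=m..n. c i * d i) = c m * d m + (\<Sum>i=Suc m..n. c i * d i)"
      using step.hyps by (simp add: sum.atLeast_Suc_atMost)
    also have "\<dots> \<le> c m * d m + c (Suc m) * (\<Sum>i=Suc m..n. d i)"
      using step by simp
    also have "\<dots> \<le> c m * d m + c m * (\<Sum>i=Suc m..n. d i)"
      using mono[of m "Suc m"] suf step
      by (intro add_left_mono mult_right_mono_neg) auto
    also have "\<dots> = c m * (\<Sum>i=m..n. d i)" using step.hyps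
      by (simp add: algebra_simps sum.atLeast_Suc_atMost)
    finally show ?case .
  qed
  have "(\<Sum>i=1..n. c i * d i) \<le> c 1 * (\<Sum>i=1..n. d i)" using key False by simp
  also have "\<dots> \<le> 0" using c1 suf False by (simp add: mult_nonneg_nonpos)
  finally show ?thesis .
qed

lemma majA:
  fixes g g' :: "real \<Rightarrow> real" and a b :: "nat \<Rightarrow> real"
  assumes n1: "n \<ge> 1" and I: "connected I" and der: "\<forall>t\<in>I. (g has_real_derivative g' t) (at t)"
    and mon: "mono_on I g'" and neg: "\<forall>t\<in>I. g' t \<le> 0"
    and aI: "\<forall>i\<in>{1..n}. a i \<in> I" and bI: "\<forall>i\<in>{1..n}. b i \<in> I"
    and amono: "\<And>i j. 1 \<le> i \<Longrightarrow> i \<le> j \<Longrightarrow> j \<le> n \<Longrightarrow> a i \<le> a j"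
    and pre: "\<forall>j\<in>{1..n}. (\<Sum>i=1..j. a i) \<ge> (\<Sum>i=1..j. b i)"
  shows "(\<Sum>i=1..n. g (a i)) \<le> (\<Sum>i=1..n. g (b i))"
proof -
  have "(\<Sum>i=1..n. g (a i)) - (\<Sum>i=1..n. g (b i)) = (\<Sum>i=1..n. g (a i) - g (b i))"
    by (simp add: sum_subtractf)
  also have "\<dots> \<le> (\<Sum>i=1..n. g' (a i) * (a i - b i))"
    using tangent_ineq[OF I der mon] aI bI by (intro sum_mono) auto
  also have "\<dots> \<le> 0"
  proof (rule abelA)
    fix i j assume "1 \<le> i" "i \<le> j" "j \<le> n"
    then show "g' (a i) \<le> g' (a j)" using mon aI amono[of i j] unfolding mono_on_def by auto
  next
    show "g' (a n) \<le> 0"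
      using neg aI n1 by auto
  next
    show "\<forall>j\<in>{1..n}. 0 \<le> (\<Sum>i = 1..j. a i - b i)"
      using pre by (simp add: sum_subtractf)
  qed
  finally show ?thesis by simp
qed

lemma majB:
  fixes g g' :: "real \<Rightarrow> real" and a b :: "nat \<Rightarrow> real"
  assumes n1: "n \<ge> 1" and I: "connected I" and der: "\<forall>t\<in>I. (g has_real_derivative g' t) (at t)"
    and mon: "mono_on I g'" and pos: "\<forall>t\<in>I. g' t \<ge> 0"
    and aI: "\<forall>i\<in>{1..n}. a i \<in> I" and bI: "\<forall>i\<in>{1..n}. b i \<in> I"
    and amono: "\<And>i j. 1 \<le> i \<Longrightarrow> i \<le> j \<Longrightarrow> j \<le> n \<Longrightarrow> a i \<le> a j"
    and suf: "\<forall>j\<in>{1..n}. (\<Sum>i=j..n. a i) \<le> (\<Sum>i=j..n. b i)"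
  shows "(\<Sum>i=1..n. g (a i)) \<le> (\<Sum>i=1..n. g (b i))"
proof -
  have "(\<Sum>i=1..n. g (a i)) - (\<Sum>i=1..n. g (b i)) = (\<Sum>i=1..n. g (a i) - g (b i))"
    by (simp add: sum_subtractf)
  also have "\<dots> \<le> (\<Sum>i=1..n. g' (a i) * (a i - b i))"
    using tangent_ineq[OF I der mon] aI bI by (intro sum_mono) auto
  also have "\<dots> \<le> 0"
  proof (rule abelB)
    fix i j assume "1 \<le> i" "i \<le> j" "j \<le> n"
    then show "g' (a i) \<le> g' (a j)" using mon aI amono[of i j] unfolding mono_on_def by auto
  next
    show "g' (a 1) \<ge> 0"
      using pos aI n1 by auto
  next
    show "\<forall>j\<in>{1..n}. (\<Sum>i = j..n. a i - b i) \<le> 0"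
      using suf by (simp add: sum_subtractf)
  qed
  finally show ?thesis by simp
qed

lemma ord_comp_mono:
  "1 \<le> i \<Longrightarrow> i \<le> j \<Longrightarrow> j \<le> n \<Longrightarrow> ord_comp n u i \<le> ord_comp n u j"
  unfolding ord_comp_def
  by (intro sorted_nth_mono) auto

lemma ord_comp_mem:
  "1 \<le> i \<Longrightarrow> i \<le> n \<Longrightarrow> ord_comp n u i \<in> u ` {1..n}"
proof -
  assume "1 \<le> i" "i \<le> n"
  then have "ord_comp n u i \<in> set (sort (map u [1..<n+1]))"
    unfolding ord_comp_def by (intro nth_mem) auto
  then show ?thesis by auto
qed

lemma ord_comp_sum:
  "(\<Sum>i=1..n. h (ord_comp n u i)) = (\<Sum>i=1..n. h (u i))"
proof -
  let ?xs = "sort (map u [1..<n+1])"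
  have "(\<Sum>i=1..n. h (ord_comp n u i)) = (\<Sum>i=0..<n. h (?xs ! i))"
    unfolding ord_comp_def
    by (rule sum.reindex_bij_witness[where i="\<lambda>i. i + 1" and j="\<lambda>i. i - 1"]) auto
  also have "\<dots> = sum_list (map h ?xs)"
    by (subst sum_list_sum_nth) simp
  also have "\<dots> = sum_list (map h (map u [1..<n+1]))"
    by (metis mset_map mset_sort sum_mset_sum_list)
  also have "\<dots> = sum_list (map (h \<circ> u) [1..<n+1])" by simp
  also have "\<dots> = sum (h \<circ> u) {1..<n+1}"
    by (simp only: sum_set_upt_conv_sum_list_nat[symmetric] set_upt)
  also have "{1..<n+1} = {1..n}" by auto
  finally show ?thesis by simp
qed



lemma cdf_max:
  assumes M: "prob_space M" and n: "n \<ge> 1"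
    and ind: "prob_space.indep_vars M (\<lambda>_. borel) X {1..n}"
    and dist: "\<forall>i\<in>{1..n}. \<forall>x. dist_fun M (X i) x = F i x"
  shows "dist_fun M (max_stat n X) x = (\<Prod>i\<in>{1..n}. F i x)"
proof -
  interpret prob_space M by (rule M)
  have meas: "X i \<in> borel_measurable M" if "i \<in> {1..n}" for i
    using ind that unfolding indep_vars_def2 by auto
  have mm: "max_stat n X \<in> borel_measurable M"
    unfolding max_stat_def by (rule borel_measurable_Max) (use meas in auto)
  have df: "dist_fun M Y x = prob (Y -` {..x} \<inter> space M)" if "Y \<in> borel_measurable M" for Y
    unfolding dist_fun_def cdf_def using that by (simp add: measure_distr)
  have ne: "{1..n} \<noteq> {}" using n by auto
  have "max_stat n X -` {..x} \<inter> space M = (\<Inter>i\<in>{1..n}. X i -` {..x} \<inter> space M)"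
    using ne by (auto simp: max_stat_def)
  then have "dist_fun M (max_stat n X) x = prob (\<Inter>i\<in>{1..n}. X i -` {..x} \<inter> space M)"
    using df[OF mm] by simp
  also have "\<dots> = (\<Prod>i\<in>{1..n}. prob (X i -` {..x} \<inter> space M))"
    using ind ne unfolding indep_vars_def2
    by (intro indep_setsD[where F="\<lambda>i. {X i -` A \<inter> space M | A. A \<in> sets borel}"]) (auto intro!: exI[where x="{..x}"])
  also have "\<dots> = (\<Prod>i\<in>{1..n}. F i x)"
  proof (rule prod.cong[OF refl])
    fix i assume i: "i \<in> {1..n}"
    show "prob (X i -` {..x} \<inter> space M) = F i x"
      using df[OF meas[OF i]] dist i by simp
  qed
  finally show ?thesis .
qed



definition Hf :: "real \<Rightarrow> real \<Rightarrow> real \<Rightarrow> real \<Rightarrow> real" where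
  "Hf mu alpha c x = (if x > mu then exp (- (c * (x - mu) powr (- alpha))) else 0)"

lemma prod_frechet:
  fixes n :: nat and lam :: "nat \<Rightarrow> real" and mu alpha x :: real
  assumes n: "n \<ge> 1" and lam: "\<forall>i\<in>{1..n}. lam i > 0"
  shows "(\<Prod>i\<in>{1..n}. frechet_cdf mu (lam i) alpha x) = Hf mu alpha (\<Sum>i\<in>{1..n}. lam i powr alpha) x"
proof (cases "x > mu")
  case True
  have "(\<Prod>i\<in>{1..n}. frechet_cdf mu (lam i) alpha x) = (\<Prod>i\<in>{1..n}. exp (- ((x - mu) powr (-alpha) * lam i powr alpha)))"
  proof (rule prod.cong[OF refl])
    fix i assume i: "i \<in> {1..n}"
    have "((x - mu) / lam i) powr (- alpha) = (x - mu) powr (-alpha) / lam i powr (-alpha)"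
      by (rule powr_divide)
    also have "\<dots> = (x - mu) powr (-alpha) * lam i powr alpha"
      using lam i by (simp add: powr_minus divide_inverse)
    finally show "frechet_cdf mu (lam i) alpha x = exp (- ((x - mu) powr (-alpha) * lam i powr alpha))"
      using True unfolding frechet_cdf_def by simp
  qed
  also have "\<dots> = exp (\<Sum>i\<in>{1..n}. - ((x - mu) powr (-alpha) * lam i powr alpha))"
    by (rule exp_sum[symmetric]) simp
  also have "\<dots> = Hf mu alpha (\<Sum>i\<in>{1..n}. lam i powr alpha) x"
    using True unfolding Hf_def by (simp add: sum_negf sum_distrib_left mult.commute)
  finally show ?thesis .
next
  case False
  have "1 \<in> {1..n}" using n by auto
  then have "(\<Prod>i\<in>{1..n}. frechet_cdf mu (lam i) alpha x) = 0"
    using False by (intro prod_zero) (auto simp: frechet_cdf_def)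
  then show ?thesis using False by (simp add: Hf_def)
qed

lemma Hf_deriv_pos:
  assumes "x > mu"
  shows "DERIV (Hf mu alpha c) x :> Hf mu alpha c x * (c * alpha * (x - mu) powr (- alpha - 1))"
proof -
  have d: "DERIV (\<lambda>y. exp (- (c * (y - mu) powr (- alpha)))) x :>
     exp (- (c * (x - mu) powr (- alpha))) * (- (c * ((- alpha) * (x - mu) powr (- alpha - 1) * 1)))"
    using assms by (auto intro!: derivative_eq_intros)
  have "DERIV (Hf mu alpha c) x :> exp (- (c * (x - mu) powr (- alpha))) * (- (c * ((- alpha) * (x - mu) powr (- alpha - 1) * 1)))"
    by (rule has_field_derivative_transform_within_open[OF d, of "{mu<..}"]) (use assms in \<open>auto simp: Hf_def\<close>)
  then show ?thesis using assms by (simp add: Hf_def mult.assoc)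
qed

lemma Hf_deriv_neg:
  assumes "x < mu"
  shows "DERIV (Hf mu alpha c) x :> 0"
  by (rule has_field_derivative_transform_within_open[OF DERIV_const, where S="{..<mu}"]) (use assms in \<open>auto simp: Hf_def\<close>)

lemma Hf_deriv_mu:
  assumes c: "c > 0" and a: "alpha > 0"
  shows "DERIV (Hf mu alpha c) mu :> 0"
proof -
  have R: "((\<lambda>t. exp (- (c * t powr (-alpha))) / t) \<longlongrightarrow> 0) (at_right 0)"
    using c a by real_asymp
  have "((\<lambda>y. (Hf mu alpha c y - Hf mu alpha c mu) / (y - mu)) \<longlongrightarrow> 0) (at_right mu)"
    unfolding filterlim_at_right_to_0[of _ _ mu]
  proof (rule Lim_transform_eventually[OF R])
    show "\<forall>\<^sub>F t in at_right 0. exp (- (c * t powr (-alpha))) / t =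
       (Hf mu alpha c (t + mu) - Hf mu alpha c mu) / (t + mu - mu)"
      unfolding eventually_at_filter by (intro always_eventually) (auto simp: Hf_def)
  qed
  moreover have "((\<lambda>y. (Hf mu alpha c y - Hf mu alpha c mu) / (y - mu)) \<longlongrightarrow> 0) (at_left mu)"
  proof (rule Lim_transform_eventually[OF tendsto_const])
    show "\<forall>\<^sub>F y in at_left mu. 0 = (Hf mu alpha c y - Hf mu alpha c mu) / (y - mu)"
      unfolding eventually_at_filter by (intro always_eventually) (auto simp: Hf_def)
  qed
  ultimately show ?thesis
    unfolding has_field_derivative_iff by (intro filterlim_split_at)
qed

lemma Hf_props:
  assumes c: "c > 0" and a: "alpha > 0"
  shows "Hf mu alpha c differentiable at x"
    and "deriv (Hf mu alpha c) x / Hf mu alpha c x = (if x > mu then c * alpha * (x - mu) powr (- alpha - 1) else 0)"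
proof -
  have "\<exists>D. DERIV (Hf mu alpha c) x :> D"
    using Hf_deriv_pos[of mu x] Hf_deriv_neg[of x mu] Hf_deriv_mu[OF c a]
    by (cases x mu rule: linorder_cases) auto
  then show "Hf mu alpha c differentiable at x" using real_differentiable_def by blast
  show "deriv (Hf mu alpha c) x / Hf mu alpha c x = (if x > mu then c * alpha * (x - mu) powr (- alpha - 1) else 0)"
  proof (cases "x > mu")
    case True
    have "Hf mu alpha c x > 0" using True by (simp add: Hf_def)
    then show ?thesis using DERIV_imp_deriv[OF Hf_deriv_pos[OF True]] True by simp
  next
    case False then show ?thesis by (simp add: Hf_def)
  qed
qed

lemma Hf_rh:
  assumes c1: "c1 > 0" and le: "c1 \<le> c2" and a: "alpha > 0"
  shows "rh_le (Hf mu alpha c1) (Hf mu alpha c2)"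
proof -
  have c2: "c2 > 0" using c1 le by simp
  show ?thesis unfolding rh_le_def
  proof (intro conjI allI)
    fix x
    show "Hf mu alpha c1 differentiable at x" "Hf mu alpha c2 differentiable at x"
      using Hf_props(1) c1 c2 a by auto
    have "c1 * alpha * (x - mu) powr (- alpha - 1) \<le> c2 * alpha * (x - mu) powr (- alpha - 1)"
      using le a by (intro mult_right_mono) auto
    then show "deriv (Hf mu alpha c1) x / Hf mu alpha c1 x \<le> deriv (Hf mu alpha c2) x / Hf mu alpha c2 x"
      unfolding Hf_props(2)[OF c1 a] Hf_props(2)[OF c2 a] by simp
  qed
qed



lemma mono_scale: "mono_on I k \<Longrightarrow> (alpha::real) > 0 \<Longrightarrow> mono_on I (\<lambda>t. alpha * (k t::real))"
  by (auto simp: monotone_on_def intro: mult_left_mono)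

lemma anti_scale: "antimono_on I k \<Longrightarrow> (alpha::real) > 0 \<Longrightarrow> mono_on I (\<lambda>t. - (alpha * (k t::real)))"
  by (auto simp: monotone_on_def intro: mult_left_mono)

lemma sign_dec:
  fixes f finv :: "real \<Rightarrow> real"
  assumes dec: "\<forall>x\<in>{0<..}. \<forall>y\<in>{0<..}. x < y \<longrightarrow> f x > f y"
    and finv: "\<forall>x\<in>{0<..}. finv (f x) = x" and I: "connected (f ` {0<..})"
    and t: "t \<in> f ` {0<..}" and d: "DERIV finv t :> d"
  shows "d \<le> 0"
proof (rule ccontr)
  assume "\<not> d \<le> 0"
  then have "d > 0" by simp
  from DERIV_pos_inc_right[OF d this] obtain \<delta> where \<delta>: "\<delta> > 0" "\<And>h. h > 0 \<Longrightarrow> h < \<delta> \<Longrightarrow> finv t < finv (t + h)" by blast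
  from t obtain l where l: "l > 0" "t = f l" by auto
  have fl2: "f (l/2) > t" using dec l by auto
  define h where "h = min (\<delta>/2) ((f (l/2) - t)/2)"
  have h3: "h \<le> (f (l/2) - t)/2" unfolding h_def by (rule min.cobounded2)
  have h: "h > 0" "h < \<delta>" "t + h \<le> f (l/2)" using \<delta> fl2 h3 by (auto simp: h_def)
  have "t + h \<in> f ` {0<..}"
    using connectedD_interval[OF I t _, of "f (l/2)" "t + h"] h l by auto
  then obtain y where y: "y > 0" "t + h = f y" by auto
  have "y < l"
  proof (rule ccontr)
    assume "\<not> y < l"
    then have "f y \<le> f l" using dec[rule_format, of l y] y l by (cases "y = l") auto
    then show False using y l h by simp
  qed
  moreover have "finv t < finv (t + h)" using \<delta> h by auto
  ultimately show False using finv y l by auto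
qed

lemma sign_inc:
  fixes f finv :: "real \<Rightarrow> real"
  assumes inc: "\<forall>x\<in>{0<..}. \<forall>y\<in>{0<..}. x < y \<longrightarrow> f x < f y"
    and finv: "\<forall>x\<in>{0<..}. finv (f x) = x" and I: "connected (f ` {0<..})"
    and t: "t \<in> f ` {0<..}" and d: "DERIV finv t :> d"
  shows "d \<ge> 0"
proof (rule ccontr)
  assume "\<not> d \<ge> 0"
  then have "d < 0" by simp
  from DERIV_neg_dec_right[OF d this] obtain \<delta> where \<delta>: "\<delta> > 0" "\<And>h. h > 0 \<Longrightarrow> h < \<delta> \<Longrightarrow> finv t > finv (t + h)" by blast
  from t obtain l where l: "l > 0" "t = f l" by auto
  have fl2: "f (2*l) > t" using inc l by auto
  define h where "h = min (\<delta>/2) ((f (2*l) - t)/2)"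
  have h3: "h \<le> (f (2*l) - t)/2" unfolding h_def by (rule min.cobounded2)
  have h: "h > 0" "h < \<delta>" "t + h \<le> f (2*l)" using \<delta> fl2 h3 by (auto simp: h_def)
  have "t + h \<in> f ` {0<..}"
    using connectedD_interval[OF I t _, of "f (2*l)" "t + h"] h l by auto
  then obtain y where y: "y > 0" "t + h = f y" by auto
  have "y > l"
  proof (rule ccontr)
    assume "\<not> y > l"
    then have "f y \<le> f l" using inc[rule_format, of y l] y l by (cases "y = l") auto
    then show False using y l h by simp
  qed
  moreover have "finv t > finv (t + h)" using \<delta> h by auto
  ultimately show False using finv y l by auto
qed

theorem mainTheorem1:
  fixes n :: nat and mu alpha :: real
    and lam lam' :: "nat \<Rightarrow> real"
    and M :: "'a measure" and N :: "'b measure"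
    and X :: "nat \<Rightarrow> 'a \<Rightarrow> real" and X' :: "nat \<Rightarrow> 'b \<Rightarrow> real"
    and f finv finv' :: "real \<Rightarrow> real"
  assumes n: "n \<ge> 1" and alpha: "alpha > 0"
    and lam_pos: "\<forall>i\<in>{1..n}. lam i > 0" and lam'_pos: "\<forall>i\<in>{1..n}. lam' i > 0"
    and M: "prob_space M" and N: "prob_space N"
    and indX: "prob_space.indep_vars M (\<lambda>_. borel) X {1..n}"
    and indX': "prob_space.indep_vars N (\<lambda>_. borel) X' {1..n}"
    and distX: "\<forall>i\<in>{1..n}. \<forall>x. dist_fun M (X i) x = frechet_cdf mu (lam i) alpha x"
    and distX': "\<forall>i\<in>{1..n}. \<forall>x. dist_fun N (X' i) x = frechet_cdf mu (lam' i) alpha x"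
    and f_mono: "(\<forall>x\<in>{0<..}. \<forall>y\<in>{0<..}. x < y \<longrightarrow> f x < f y) \<or>
                 (\<forall>x\<in>{0<..}. \<forall>y\<in>{0<..}. x < y \<longrightarrow> f x > f y)"
    and f_cont: "continuous_on {0<..} f"
    and finv: "\<forall>x\<in>{0<..}. finv (f x) = x"
    and finv_deriv: "\<forall>a\<in>f ` {0<..}. (finv has_real_derivative finv' a) (at a)"
  defines "k \<equiv> (\<lambda>a. finv' a * finv a powr (alpha - 1))"
    and "u \<equiv> (\<lambda>i. f (lam i))" and "u' \<equiv> (\<lambda>i. f (lam' i))"
  shows
    "((\<forall>x\<in>{0<..}. \<forall>y\<in>{0<..}. x < y \<longrightarrow> f x > f y) \<longrightarrow>
        ((mono_on (f ` {0<..}) k \<and>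
          (\<forall>j\<in>{1..n}. (\<Sum>i=1..j. ord_comp n u' i) \<ge> (\<Sum>i=1..j. ord_comp n u i)))
           \<longrightarrow> rv_rh_le N (max_stat n X') M (max_stat n X)) \<and>
        ((antimono_on (f ` {0<..}) k \<and>
          (\<forall>j\<in>{1..n}. (\<Sum>i=j..n. ord_comp n u i) \<le> (\<Sum>i=j..n. ord_comp n u' i)))
           \<longrightarrow> rv_rh_le N (max_stat n X') M (max_stat n X))) \<and>
     ((\<forall>x\<in>{0<..}. \<forall>y\<in>{0<..}. x < y \<longrightarrow> f x < f y) \<longrightarrow>
        ((antimono_on (f ` {0<..}) k \<and>
          (\<forall>j\<in>{1..n}. (\<Sum>i=1..j. ord_comp n u' i) \<ge> (\<Sum>i=1..j. ord_comp n u i)))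
           \<longrightarrow> rv_rh_le M (max_stat n X) N (max_stat n X')) \<and>
        ((mono_on (f ` {0<..}) k \<and>
          (\<forall>j\<in>{1..n}. (\<Sum>i=j..n. ord_comp n u i) \<le> (\<Sum>i=j..n. ord_comp n u' i)))
           \<longrightarrow> rv_rh_le M (max_stat n X) N (max_stat n X')))"
proof -
  define I where "I = f ` {0<..}"
  have conI: "connected I" unfolding I_def
    by (rule connected_continuous_image[OF f_cont]) simp
  define g where "g = (\<lambda>t. finv t powr alpha)"
  have finv_pos: "finv t > 0" if "t \<in> I" for t using that finv unfolding I_def by auto
  have gder: "\<forall>t\<in>I. (g has_real_derivative alpha * k t) (at t)"
  proof
    fix t assume t: "t \<in> I"
    have "DERIV (\<lambda>x. (finv x) powr alpha) t :> alpha * (finv t) powr (alpha - of_nat 1) * finv' t"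
      by (rule DERIV_fun_powr) (use finv_deriv t finv_pos[OF t] in \<open>auto simp: I_def\<close>)
    then show "(g has_real_derivative alpha * k t) (at t)"
      unfolding g_def k_def by (simp add: mult_ac)
  qed
  have ngder: "\<forall>t\<in>I. ((\<lambda>t. - g t) has_real_derivative - (alpha * k t)) (at t)"
    using gder by (auto intro!: derivative_eq_intros)
  have uI: "\<forall>i\<in>{1..n}. ord_comp n u i \<in> I"
    using ord_comp_mem[of _ n u] lam_pos unfolding u_def I_def by fastforce
  have u'I: "\<forall>i\<in>{1..n}. ord_comp n u' i \<in> I"
    using ord_comp_mem[of _ n u'] lam'_pos unfolding u'_def I_def by fastforce
  define c where "c = (\<Sum>i\<in>{1..n}. lam i powr alpha)"
  define c' where "c' = (\<Sum>i\<in>{1..n}. lam' i powr alpha)"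
  have gsum: "(\<Sum>i=1..n. g (ord_comp n u i)) = c"
  proof -
    have "(\<Sum>i=1..n. g (ord_comp n u i)) = (\<Sum>i=1..n. g (u i))" by (rule ord_comp_sum)
    also have "\<dots> = c" unfolding c_def g_def u_def using finv lam_pos by (intro sum.cong) auto
    finally show ?thesis .
  qed
  have gsum': "(\<Sum>i=1..n. g (ord_comp n u' i)) = c'"
  proof -
    have "(\<Sum>i=1..n. g (ord_comp n u' i)) = (\<Sum>i=1..n. g (u' i))" by (rule ord_comp_sum)
    also have "\<dots> = c'" unfolding c'_def g_def u'_def using finv lam'_pos by (intro sum.cong) auto
    finally show ?thesis .
  qed
  have ngsum: "(\<Sum>i=1..n. - g (ord_comp n u i)) = - c" using gsum by (simp add: sum_negf)
  have ngsum': "(\<Sum>i=1..n. - g (ord_comp n u' i)) = - c'" using gsum' by (simp add: sum_negf)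
  have cpos: "c > 0" unfolding c_def
  proof (rule sum_pos)
    fix i assume "i \<in> {1..n}" then have "0 < lam i" using lam_pos by blast
    then show "0 < lam i powr alpha" by simp
  qed (use n in auto)
  have c'pos: "c' > 0" unfolding c'_def
  proof (rule sum_pos)
    fix i assume "i \<in> {1..n}" then have "0 < lam' i" using lam'_pos by blast
    then show "0 < lam' i powr alpha" by simp
  qed (use n in auto)
  have dX: "dist_fun M (max_stat n X) = Hf mu alpha c"
    using cdf_max[OF M n indX distX] prod_frechet[OF n lam_pos] unfolding c_def by auto
  have dX': "dist_fun N (max_stat n X') = Hf mu alpha c'"
    using cdf_max[OF N n indX' distX'] prod_frechet[OF n lam'_pos] unfolding c'_def by auto
  have omono: "\<And>v i j. 1 \<le> i \<Longrightarrow> i \<le> j \<Longrightarrow> j \<le> n \<Longrightarrow> ord_comp n v i \<le> ord_comp n v j"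
    by (rule ord_comp_mono)
  have r1: "rv_rh_le N (max_stat n X') M (max_stat n X)" if "c' \<le> c"
    unfolding rv_rh_le_def dX dX' using Hf_rh[OF c'pos that alpha] .
  have r2: "rv_rh_le M (max_stat n X) N (max_stat n X')" if "c \<le> c'"
    unfolding rv_rh_le_def dX dX' using Hf_rh[OF cpos that alpha] .
  have kdec: "k t \<le> 0" if dec: "\<forall>x\<in>{0<..}. \<forall>y\<in>{0<..}. x < y \<longrightarrow> f x > f y" and t: "t \<in> I" for t
  proof -
    have "finv' t \<le> 0"
      using sign_dec[OF dec finv conI[unfolded I_def]] t finv_deriv unfolding I_def by auto
    then show ?thesis unfolding k_def by (simp add: mult_nonpos_nonneg)
  qed
  have kinc: "k t \<ge> 0" if inc: "\<forall>x\<in>{0<..}. \<forall>y\<in>{0<..}. x < y \<longrightarrow> f x < f y" and t: "t \<in> I" for t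
  proof -
    have "finv' t \<ge> 0"
      using sign_inc[OF inc finv conI[unfolded I_def]] t finv_deriv unfolding I_def by auto
    then show ?thesis unfolding k_def by simp
  qed
  show ?thesis
  proof (intro conjI impI)
    assume dec: "\<forall>x\<in>{0<..}. \<forall>y\<in>{0<..}. x < y \<longrightarrow> f x > f y"
    {
      assume h: "mono_on (f ` {0<..}) k \<and>
          (\<forall>j\<in>{1..n}. (\<Sum>i=1..j. ord_comp n u' i) \<ge> (\<Sum>i=1..j. ord_comp n u i))"
      have "(\<Sum>i=1..n. g (ord_comp n u' i)) \<le> (\<Sum>i=1..n. g (ord_comp n u i))"
        by (rule majA[OF n conI gder mono_scale[OF _ alpha] _ u'I uI omono])
           (use h kdec[OF dec] alpha in \<open>auto simp: I_def mult_nonneg_nonpos\<close>)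
      then show "rv_rh_le N (max_stat n X') M (max_stat n X)" using r1 gsum gsum' by simp
    }
    {
      assume h: "antimono_on (f ` {0<..}) k \<and>
          (\<forall>j\<in>{1..n}. (\<Sum>i=j..n. ord_comp n u i) \<le> (\<Sum>i=j..n. ord_comp n u' i))"
      have "(\<Sum>i=1..n. - g (ord_comp n u i)) \<le> (\<Sum>i=1..n. - g (ord_comp n u' i))"
        by (rule majB[OF n conI ngder anti_scale[OF _ alpha] _ uI u'I omono])
           (use h kdec[OF dec] alpha in \<open>auto simp: I_def mult_nonneg_nonpos\<close>)
      then show "rv_rh_le N (max_stat n X') M (max_stat n X)" using r1 ngsum ngsum' by simp
    }
  next
    assume inc: "\<forall>x\<in>{0<..}. \<forall>y\<in>{0<..}. x < y \<longrightarrow> f x < f y"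
    {
      assume h: "antimono_on (f ` {0<..}) k \<and>
          (\<forall>j\<in>{1..n}. (\<Sum>i=1..j. ord_comp n u' i) \<ge> (\<Sum>i=1..j. ord_comp n u i))"
      have "(\<Sum>i=1..n. - g (ord_comp n u' i)) \<le> (\<Sum>i=1..n. - g (ord_comp n u i))"
        by (rule majA[OF n conI ngder anti_scale[OF _ alpha] _ u'I uI omono])
           (use h kinc[OF inc] alpha in \<open>auto simp: I_def\<close>)
      then show "rv_rh_le M (max_stat n X) N (max_stat n X')" using r2 ngsum ngsum' by simp
    }
    {
      assume h: "mono_on (f ` {0<..}) k \<and>
          (\<forall>j\<in>{1..n}. (\<Sum>i=j..n. ord_comp n u i) \<le> (\<Sum>i=j..n. ord_comp n u' i))"
      have "(\<Sum>i=1..n. g (ord_comp n u i)) \<le> (\<Sum>i=1..n. g (ord_comp n u' i))"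
        by (rule majB[OF n conI gder mono_scale[OF _ alpha] _ uI u'I omono])
           (use h kinc[OF inc] alpha in \<open>auto simp: I_def\<close>)
      then show "rv_rh_le M (max_stat n X) N (max_stat n X')" using r2 gsum gsum' by simp
    }
  qed
qed

end
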